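(* Let $G$ be a fullerene graph that has an efficient dominating set. Then the number of vertices of $G$ is divisible by $8$.
   Context: A fullerene graph is a finite simple connected (equivalently, $3$-connected) plane cubic graph all of whose faces are pentagons or hexagons. An efficient dominating set of a graph $G$ is an independent vertex set $D$ of $G$ such that every vertex of $G$ not in $D$ is adjacent to exactly one vertex of $D$. *)

theory Defs
  imports Main
begin

definition simple_graph :: "'a set \<Rightarrow> ('a \<Rightarrow> 'a \<Rightarrow> bool) \<Rightarrow> bool" where
  "simple_graph V E \<longleftrightarrow> finite V \<and> (\<forall>u v. E u v \<longrightarrow> u \<in> V \<and> v \<in> V)
     \<and> (\<forall>u v. E u v \<longrightarrow> E v u) \<and> (\<forall>v. \<not> E v v)"

definition nbrs :: "('a \<Rightarrow> 'a \<Rightarrow> bool) \<Rightarrow> 'a \<Rightarrow> 'a set" where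
  "nbrs E v = {u. E v u}"

definition cubic :: "'a set \<Rightarrow> ('a \<Rightarrow> 'a \<Rightarrow> bool) \<Rightarrow> bool" where
  "cubic V E \<longleftrightarrow> (\<forall>v\<in>V. card (nbrs E v) = 3)"

definition connected_graph :: "'a set \<Rightarrow> ('a \<Rightarrow> 'a \<Rightarrow> bool) \<Rightarrow> bool" where
  "connected_graph V E \<longleftrightarrow> V \<noteq> {} \<and> (\<forall>u\<in>V. \<forall>v\<in>V. E\<^sup>*\<^sup>* u v)"

definition edges :: "('a \<Rightarrow> 'a \<Rightarrow> bool) \<Rightarrow> 'a set set" where
  "edges E = {{u, v} | u v. E u v}"

definition darts :: "('a \<Rightarrow> 'a \<Rightarrow> bool) \<Rightarrow> ('a \<times> 'a) set" where
  "darts E = {(u, v). E u v}"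

text \<open>A rotation system: for each vertex v, rot v is a cyclic permutation of the
  neighbours of v.  For degree 3 this means: a fixed-point-free permutation of the
  3 neighbours (which is necessarily a 3-cycle).\<close>

definition rotation_system :: "'a set \<Rightarrow> ('a \<Rightarrow> 'a \<Rightarrow> bool) \<Rightarrow> ('a \<Rightarrow> 'a \<Rightarrow> 'a) \<Rightarrow> bool" where
  "rotation_system V E rot \<longleftrightarrow> (\<forall>v\<in>V. bij_betw (rot v) (nbrs E v) (nbrs E v)
      \<and> (\<forall>u\<in>nbrs E v. rot v u \<noteq> u))"

definition face_step :: "('a \<Rightarrow> 'a \<Rightarrow> 'a) \<Rightarrow> 'a \<times> 'a \<Rightarrow> 'a \<times> 'a" where
  "face_step rot d = (snd d, rot (snd d) (fst d))"

definition face_of :: "('a \<Rightarrow> 'a \<Rightarrow> 'a) \<Rightarrow> 'a \<times> 'a \<Rightarrow> ('a \<times> 'a) set" where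
  "face_of rot d = {(face_step rot ^^ n) d | n. True}"

definition faces :: "('a \<Rightarrow> 'a \<Rightarrow> bool) \<Rightarrow> ('a \<Rightarrow> 'a \<Rightarrow> 'a) \<Rightarrow> ('a \<times> 'a) set set" where
  "faces E rot = face_of rot ` darts E"

text \<open>A plane (spherical) embedding of a connected graph is given combinatorially by a
  rotation system whose number of faces satisfies Euler's formula V - E + F = 2.
  A fullerene: connected plane cubic simple graph all of whose faces are pentagons or
  hexagons (the face boundary is a cycle of length 5 or 6).\<close>

definition fullerene :: "'a set \<Rightarrow> ('a \<Rightarrow> 'a \<Rightarrow> bool) \<Rightarrow> bool" where
  "fullerene V E \<longleftrightarrow> simple_graph V E \<and> connected_graph V E \<and> cubic V E \<and>
    (\<exists>rot. rotation_system V E rot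
       \<and> int (card V) - int (card (edges E)) + int (card (faces E rot)) = 2
       \<and> (\<forall>f\<in>faces E rot. (card f = 5 \<or> card f = 6) \<and> card (fst ` f) = card f))"

definition efficient_dominating_set :: "'a set \<Rightarrow> ('a \<Rightarrow> 'a \<Rightarrow> bool) \<Rightarrow> 'a set \<Rightarrow> bool" where
  "efficient_dominating_set V E D \<longleftrightarrow> D \<subseteq> V
     \<and> (\<forall>u\<in>D. \<forall>v\<in>D. \<not> E u v)
     \<and> (\<forall>v\<in>V - D. card {u\<in>D. E v u} = 1)"

end

theory Submission
  imports Defs
begin

lemma inv_even:
  "finite A \<Longrightarrow> \<forall>a\<in>A. g a \<in> A \<and> g (g a) = a \<and> g a \<noteq> a \<Longrightarrow> even (card A)"
proof (induction "card A" arbitrary: A rule: less_induct)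
  case less
  show ?case
  proof (cases "A = {}")
    case True thus ?thesis by simp
  next
    case False
    then obtain a where a: "a \<in> A" by auto
    let ?B = "A - {a, g a}"
    have sub: "{a, g a} \<subseteq> A" using a less.prems by auto
    have c2: "card {a, g a} = 2" using a less.prems by auto
    have cB: "card ?B = card A - 2" using sub c2 less.prems(1) by (simp add: card_Diff_subset)
    have "card A \<ge> 2" using sub c2 less.prems(1) by (metis card_mono)
    then have lt: "card ?B < card A" using cB by simp
    have "\<forall>b\<in>?B. g b \<in> ?B \<and> g (g b) = b \<and> g b \<noteq> b"
      using less.prems(2) a by (metis (no_types, lifting) Diff_iff insertCI insertE singletonD)
    then have "even (card ?B)" using less.hyps[OF lt] less.prems(1) by blast
    then show ?thesis using cB \<open>card A \<ge> 2\<close> by (metis add_diff_inverse_nat even_add nat_less_le not_less dvd_refl)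
  qed
qed

lemma three_lemma:
  assumes b: "bij_betw r S S" and c: "card S = 3" and fp: "\<forall>u\<in>S. r u \<noteq> u"
    and a: "a \<in> S" "b \<in> S" "a \<noteq> b"
  shows "r a = b \<longleftrightarrow> r b \<noteq> a"
proof -
  obtain c where cS: "c \<in> S" "c \<noteq> a" "c \<noteq> b"
  proof -
    have "\<not> S \<subseteq> {a, b}"
    proof
      assume "S \<subseteq> {a, b}"
      then have "card S \<le> card {a, b}" by (intro card_mono) auto
      also have "\<dots> \<le> 2" by (simp add: card_insert_if)
      finally show False using c by simp
    qed
    then show ?thesis using that by blast
  qed
  have S: "S = {a, b, c}"
  proof -
    have "{a,b,c} \<subseteq> S" using a cS by auto
    moreover have "card {a,b,c} = 3" using a cS by auto
    moreover have "finite S" using c by (metis card.infinite zero_neq_numeral)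
    ultimately show ?thesis using c by (metis card_subset_eq)
  qed
  have inj: "inj_on r S" using b bij_betw_def by blast
  have im: "\<forall>u\<in>S. r u \<in> S" using b bij_betwE by blast
  show ?thesis
    using inj im fp a cS unfolding S inj_on_def by auto
qed

lemma orbit_period:
  fixes f :: "'b \<Rightarrow> 'b"
  assumes card: "card {(f^^n) d | n. True} = s" and s: "s > 0"
   and inj: "inj_on f {(f^^n) d | n. True}"
  shows "(f^^s) d = d \<and> (\<forall>i j. i < j \<longrightarrow> j < s \<longrightarrow> (f^^i) d \<noteq> (f^^j) d)"
proof -
  define Orb where "Orb = {(f^^n) d | n. True}"
  have finO: "finite Orb" using card s Orb_def by (metis card.infinite less_irrefl)
  have dist: "(f^^i) d \<noteq> (f^^j) d" if ij: "i < j" "j < s" for i j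
  proof
    assume eq: "(f^^i) d = (f^^j) d"
    have all: "(f^^n) d \<in> (\<lambda>m. (f^^m) d) ` {..<j}" for n
    proof (induction n rule: less_induct)
      case (less n)
      show ?case
      proof (cases "n < j")
        case True thus ?thesis by auto
      next
        case False
        have "(f^^n) d = (f^^(n-j)) ((f^^j) d)" using False
          by (metis funpow_add le_add_diff_inverse2 not_less o_apply)
        also have "\<dots> = (f^^(n-j)) ((f^^i) d)" using eq by simp
        also have "\<dots> = (f^^(n-j+i)) d" by (simp add: funpow_add)
        finally have "(f^^n) d = (f^^(n-j+i)) d" .
        moreover have "n - j + i < n" using False ij by simp
        ultimately show ?thesis using less.IH by simp
      qed
    qed
    have "Orb \<subseteq> (\<lambda>m. (f^^m) d) ` {..<j}" unfolding Orb_def using all by auto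
    then have "card Orb \<le> card {..<j}" by (meson card_image_le card_mono finite_lessThan finite_imageI le_trans)
    then show False using card ij unfolding Orb_def by simp
  qed
  have injs: "inj_on (\<lambda>m. (f^^m) d) {..<s}"
    unfolding inj_on_def using dist by (metis lessThan_iff nat_neq_iff)
  have sub: "(\<lambda>m. (f^^m) d) ` {..<s} \<subseteq> Orb" unfolding Orb_def by auto
  have "card ((\<lambda>m. (f^^m) d) ` {..<s}) = s" using injs by (simp add: card_image)
  then have Oeq: "Orb = (\<lambda>m. (f^^m) d) ` {..<s}" using sub finO card unfolding Orb_def
    by (metis card_subset_eq)
  have "(f^^s) d \<in> Orb" unfolding Orb_def by auto
  then obtain i where i: "i < s" "(f^^s) d = (f^^i) d" using Oeq by auto
  have "i = 0"
  proof (rule ccontr)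
    assume "i \<noteq> 0"
    then obtain i' where i': "i = Suc i'" by (cases i) auto
    obtain s' where s': "s = Suc s'" using s by (cases s) auto
    have "f ((f^^s') d) = f ((f^^i') d)" using i i' s' by simp
    moreover have "(f^^s') d \<in> Orb" "(f^^i') d \<in> Orb" unfolding Orb_def by auto
    ultimately have "(f^^s') d = (f^^i') d" using inj unfolding Orb_def inj_on_def by blast
    moreover have "i' < s'" using i i' s' by simp
    ultimately show False using dist[of i' s'] s' by (metis lessI)
  qed
  then show ?thesis using i dist by simp
qed


locale fsetup =
  fixes V :: "'a set" and E :: "'a \<Rightarrow> 'a \<Rightarrow> bool" and D :: "'a set" and rot :: "'a \<Rightarrow> 'a \<Rightarrow> 'a"
  assumes fin: "finite V"
  and edge_in: "\<And>u v. E u v \<Longrightarrow> u \<in> V \<and> v \<in> V"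
  and sym: "\<And>u v. E u v \<Longrightarrow> E v u"
  and irr: "\<And>v. \<not> E v v"
  and cub: "\<And>v. v \<in> V \<Longrightarrow> card (nbrs E v) = 3"
  and rotb: "\<And>v. v \<in> V \<Longrightarrow> bij_betw (rot v) (nbrs E v) (nbrs E v)"
  and rotfp: "\<And>v u. v \<in> V \<Longrightarrow> u \<in> nbrs E v \<Longrightarrow> rot v u \<noteq> u"
  and faces56: "\<And>u v. E u v \<Longrightarrow> card (face_of rot (u,v)) = 5 \<or> card (face_of rot (u,v)) = 6"
  and DV: "D \<subseteq> V"
  and indep: "\<And>u v. u \<in> D \<Longrightarrow> v \<in> D \<Longrightarrow> \<not> E u v"
  and dom: "\<And>v. v \<in> V \<Longrightarrow> v \<notin> D \<Longrightarrow> card {u\<in>D. E v u} = 1"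
begin

definition dl where "dl x = (SOME d. d \<in> D \<and> E x d)"

lemma dl_ex: "x \<in> V \<Longrightarrow> x \<notin> D \<Longrightarrow> \<exists>!d. d \<in> D \<and> E x d"
proof -
  assume "x \<in> V" "x \<notin> D"
  then have "card {u\<in>D. E x u} = 1" by (rule dom)
  then obtain z where "{u\<in>D. E x u} = {z}" by (metis card_1_singletonE)
  then show ?thesis by (metis (mono_tags, lifting) mem_Collect_eq singletonD singletonI)
qed

lemma dl: "x \<in> V \<Longrightarrow> x \<notin> D \<Longrightarrow> dl x \<in> D \<and> E x (dl x)"
  unfolding dl_def using dl_ex by (metis (mono_tags, lifting) someI_ex)

lemma dl_uniq: "x \<in> V \<Longrightarrow> x \<notin> D \<Longrightarrow> d \<in> D \<Longrightarrow> E x d \<Longrightarrow> dl x = d"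
  using dl dl_ex by blast

lemma rot_nb: "E v u \<Longrightarrow> E v (rot v u)"
  using rotb[of v] edge_in[of v u] unfolding nbrs_def by (metis bij_betwE mem_Collect_eq)

lemma rot_inj: "E v u \<Longrightarrow> E v u' \<Longrightarrow> rot v u = rot v u' \<Longrightarrow> u = u'"
  using rotb[of v] edge_in[of v u] unfolding nbrs_def
  by (metis bij_betw_imp_inj_on inj_onD mem_Collect_eq)

lemma rot_ne: "E v u \<Longrightarrow> rot v u \<noteq> u"
  using rotfp[of v u] edge_in[of v u] unfolding nbrs_def by simp

lemma three: "E v a \<Longrightarrow> E v b \<Longrightarrow> a \<noteq> b \<Longrightarrow> (rot v a = b \<longleftrightarrow> rot v b \<noteq> a)"
proof -
  assume a: "E v a" "E v b" "a \<noteq> b"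
  have vV: "v \<in> V" using a edge_in by blast
  show ?thesis
    apply (rule three_lemma[OF rotb[OF vV] cub[OF vV]])
    using rotfp[OF vV] a unfolding nbrs_def by auto
qed

definition L where "L = V - D"

lemma leaf_nb: "x \<in> L \<Longrightarrow> E x y \<Longrightarrow> y \<noteq> dl x \<Longrightarrow> y \<in> L"
  unfolding L_def using edge_in dl_uniq by blast

lemma D_nb: "d \<in> D \<Longrightarrow> E d x \<Longrightarrow> x \<in> L \<and> dl x = d"
  unfolding L_def using edge_in indep dl_uniq sym by blast

lemma dlL: "x \<in> L \<Longrightarrow> dl x \<in> D \<and> E x (dl x)"
  unfolding L_def using dl by blast

definition Pre where "Pre = (\<lambda>x. (x, rot x (dl x))) ` L"
definition P1 where "P1 = {p \<in> Pre. rot (snd p) (fst p) \<in> D}"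
definition P2 where "P2 = {p \<in> Pre. rot (snd p) (fst p) \<notin> D}"

lemma finL: "finite L" unfolding L_def using fin by simp

lemma Pre_card: "card Pre = card L"
  unfolding Pre_def by (rule card_image) (auto simp: inj_on_def)

lemma Pre_split: "card Pre = card P1 + card P2"
proof -
  have "finite Pre" unfolding Pre_def using finL by simp
  moreover have "Pre = P1 \<union> P2" "P1 \<inter> P2 = {}" unfolding P1_def P2_def by auto
  ultimately show ?thesis by (metis card_Un_disjoint finite_Un)
qed

lemma Pre_mem: "(x, y) \<in> Pre \<Longrightarrow> x \<in> L \<and> rot x (dl x) = y \<and> E x y \<and> y \<in> L"
proof -
  assume "(x, y) \<in> Pre"
  then have x: "x \<in> L" and y: "y = rot x (dl x)" unfolding Pre_def by auto
  have "E x (dl x)" using dlL[OF x] by simp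
  then have "E x y" "y \<noteq> dl x" using y rot_nb rot_ne by auto
  then show ?thesis using x y leaf_nb by blast
qed

lemma P2_swap: "(x,y) \<in> P2 \<Longrightarrow> (y,x) \<in> P2 \<and> x \<noteq> y"
proof -
    assume p: "(x,y) \<in> P2"
    have pre: "(x,y) \<in> Pre" and nd: "rot y x \<notin> D" using p unfolding P2_def by simp_all
    have pm: "x \<in> L" "E x y" "y \<in> L" using Pre_mem[OF pre] by auto
    have yeq: "rot x (dl x) = y" using Pre_mem[OF pre] by auto
    have dy: "dl y \<in> D" "E y (dl y)" using dlL pm by auto
    have "dl y \<noteq> x" using dy pm unfolding L_def by auto
    have Eyx: "E y x" using pm sym by blast
    have "rot y x \<noteq> dl y" using nd dy(1) by auto
    then have "rot y (dl y) = x" using three[OF dy(2) Eyx \<open>dl y \<noteq> x\<close>] by blast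
    then have pre2: "(y, x) \<in> Pre" unfolding Pre_def using pm(3) by force
    have dx: "dl x \<in> D" "E x (dl x)" using dlL pm by auto
    have "rot x y \<notin> D"
    proof
      assume "rot x y \<in> D"
      then have "dl x = rot x y" using dl_uniq[of x "rot x y"] pm(1) rot_nb[OF pm(2)] unfolding L_def by blast
      moreover have "dl x \<noteq> y" using pm dx unfolding L_def by auto
      ultimately show False using three[OF dx(2) pm(2)] yeq by simp
    qed
    then have "(y, x) \<in> P2" using pre2 unfolding P2_def by auto
    moreover have "x \<noteq> y" using pm irr by blast
    ultimately show ?thesis by blast
qed

lemma P2_even: "even (card P2)"
proof (rule inv_even[where g = "\<lambda>p. (snd p, fst p)"])
  show "finite P2" unfolding P2_def Pre_def using finL by simp
  show "\<forall>a\<in>P2. (snd a, fst a) \<in> P2 \<and> (snd (snd a, fst a), fst (snd a, fst a)) = a \<and> (snd a, fst a) \<noteq> a"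
    using P2_swap by fastforce
qed

lemma fs_simp: "face_step rot (u,v) = (v, rot v u)" by (simp add: face_step_def)

lemma fs_inj: "inj_on (face_step rot) {p. E (fst p) (snd p)}"
proof (rule inj_onI)
  fix p q assume p: "p \<in> {p. E (fst p) (snd p)}" and q: "q \<in> {p. E (fst p) (snd p)}"
    and eq: "face_step rot p = face_step rot q"
  obtain u v where uv: "p = (u,v)" by (cases p)
  obtain u' v' where uv': "q = (u',v')" by (cases q)
  have vv: "v = v'" and r: "rot v u = rot v u'" using eq uv uv' by (auto simp: face_step_def)
  have "E v u" "E v u'" using p q uv uv' vv sym by auto
  then have "u = u'" using rot_inj r by blast
  then show "p = q" using uv uv' vv by simp
qed

lemma orb_dart: "E u v \<Longrightarrow> (face_step rot ^^ n) (u,v) \<in> {p. E (fst p) (snd p)}"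
proof (induction n)
  case 0 then show ?case by simp
next
  case (Suc n)
  obtain a b where ab: "(face_step rot ^^ n) (u,v) = (a,b)" by (cases "(face_step rot ^^ n) (u,v)")
  have "E a b" using Suc ab by simp
  then have "E b (rot b a)" using sym rot_nb by blast
  moreover have "(face_step rot ^^ Suc n) (u,v) = face_step rot (a,b)" using ab by simp
  ultimately show ?case by (simp add: fs_simp)
qed

lemma P1_step:
  assumes p1: "(x,y) \<in> P1"
  shows "(face_step rot ^^ 3) (x,y) \<in> P1 \<and> (face_step rot ^^ 3) ((face_step rot ^^ 3) (x,y)) = (x,y)
     \<and> (face_step rot ^^ 3) (x,y) \<noteq> (x,y)"
proof -
  let ?F = "face_step rot"
  have pre: "(x,y) \<in> Pre" and dD: "rot y x \<in> D" using p1 unfolding P1_def by simp_all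
  have pm: "x \<in> L" "E x y" "y \<in> L" using Pre_mem[OF pre] by auto
  have yeq: "rot x (dl x) = y" using Pre_mem[OF pre] by auto
  define d' where "d' = rot y x"
  define x' where "x' = rot d' y"
  define y' where "y' = rot x' d'"
  define z where "z = rot y' x'"
  define w where "w = rot z y'"
  have e3: "(?F^^3) (x,y) = (x',y')"
    by (simp add: numeral_3_eq_3 face_step_def d'_def x'_def y'_def)
  have e5: "(?F^^5) (x,y) = (z,w)"
    by (simp add: eval_nat_numeral face_step_def d'_def x'_def y'_def z_def w_def)
  have e6: "(?F^^6) (x,y) = (w, rot w z)"
    by (simp add: eval_nat_numeral face_step_def d'_def x'_def y'_def z_def w_def)
  have Eyd: "E y d'" unfolding d'_def using rot_nb sym pm(2) by blast
  have dD': "d' \<in> D" using dD d'_def by simp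
  have Edx: "E d' x'" unfolding x'_def using rot_nb sym Eyd by blast
  have x'L: "x' \<in> L" and dlx': "dl x' = d'" using D_nb[OF dD' Edx] by auto
  have Exy: "E x' y'" unfolding y'_def using rot_nb sym Edx by blast
  have "y' \<noteq> d'" unfolding y'_def using rot_ne sym Edx by blast
  then have y'L: "y' \<in> L" using leaf_nb[OF x'L Exy] dlx' by simp
  have Eyz: "E y' z" unfolding z_def using rot_nb sym Exy by blast
  have Ezw: "E z w" unfolding w_def using rot_nb sym Eyz by blast
  have pre3: "(x',y') \<in> Pre" unfolding Pre_def using x'L dlx' y'_def by force
  define s where "s = card (face_of rot (x,y))"
  have s56: "s = 5 \<or> s = 6" unfolding s_def using faces56 pm(2) by blast
  have inj: "inj_on ?F {(?F^^n) (x,y) | n. True}"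
    by (rule inj_on_subset[OF fs_inj]) (use orb_dart pm(2) in blast)
  have per: "(?F^^s) (x,y) = (x,y) \<and> (\<forall>i j. i < j \<longrightarrow> j < s \<longrightarrow> (?F^^i) (x,y) \<noteq> (?F^^j) (x,y))"
  proof (rule orbit_period[OF _ _ inj])
    have fo: "face_of rot (x,y) = {(?F^^n) (x,y) | n. True}" by (simp add: face_of_def)
    show "card {(?F^^n) (x,y) | n. True} = s" using s_def fo by simp
    show "0 < s" using s56 by auto
  qed
  have dxD: "dl x \<in> D" "E x (dl x)" using dlL pm(1) by auto
  show ?thesis
  proof (cases "s = 5")
    case True
    then have "z = x" "w = y" using per e5 by auto
    then have r1: "rot x y' = y" and E1: "E x y'" using w_def Eyz sym by auto
    have "y' = dl x" using rot_inj[OF E1 dxD(2)] r1 yeq by simp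
    then show ?thesis using y'L dxD unfolding L_def by auto
  next
    case False
    then have s6: "s = 6" using s56 by simp
    then have "w = x" "rot w z = y" using per e6 by auto
    then have r1: "rot x z = y" and E1: "E x z" using Ezw sym by auto
    have "z = dl x" using rot_inj[OF E1 dxD(2)] r1 yeq by simp
    then have "z \<in> D" using dxD by simp
    then have "(x',y') \<in> P1" using pre3 z_def unfolding P1_def by simp
    moreover have "(?F^^3) ((?F^^3) (x,y)) = (x,y)"
    proof -
      have "(?F^^3) ((?F^^3) (x,y)) = (?F^^(3+3)) (x,y)" by (simp only: funpow_add o_apply)
      then show ?thesis using per s6 by simp
    qed
    moreover have "(?F^^3) (x,y) \<noteq> (x,y)"
    proof -
      have "\<forall>i j. i < j \<longrightarrow> j < 6 \<longrightarrow> (?F^^i) (x,y) \<noteq> (?F^^j) (x,y)" using per s6 by simp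
      moreover have "(0::nat) < 3" "(3::nat) < 6" by simp_all
      ultimately have "(?F^^0) (x,y) \<noteq> (?F^^3) (x,y)" by blast
      then show ?thesis by simp
    qed
    ultimately show ?thesis using e3 by simp
  qed
qed

lemma P1_even: "even (card P1)"
proof (rule inv_even[where g = "face_step rot ^^ 3"])
  show "finite P1" unfolding P1_def Pre_def using finL by simp
  show "\<forall>a\<in>P1. (face_step rot ^^ 3) a \<in> P1 \<and> (face_step rot ^^ 3) ((face_step rot ^^ 3) a) = a \<and> (face_step rot ^^ 3) a \<noteq> a"
  proof
    fix a assume a: "a \<in> P1"
    obtain x y where "a = (x,y)" by (cases a)
    then show "(face_step rot ^^ 3) a \<in> P1 \<and> (face_step rot ^^ 3) ((face_step rot ^^ 3) a) = a \<and> (face_step rot ^^ 3) a \<noteq> a"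
      using P1_step a by simp
  qed
qed

lemma cardL: "card L = 3 * card D"
proof -
  have Leq: "L = (\<Union>d\<in>D. nbrs E d)"
  proof
    show "L \<subseteq> (\<Union>d\<in>D. nbrs E d)"
    proof
      fix x assume "x \<in> L"
      then have "dl x \<in> D" "E (dl x) x" using dlL sym by auto
      then show "x \<in> (\<Union>d\<in>D. nbrs E d)" unfolding nbrs_def by auto
    qed
    show "(\<Union>d\<in>D. nbrs E d) \<subseteq> L" using D_nb unfolding nbrs_def by auto
  qed
  have finD: "finite D" using fin DV finite_subset by auto
  have c3: "\<forall>d\<in>D. card (nbrs E d) = 3" using cub DV by auto
  have "card L = (\<Sum>d\<in>D. card (nbrs E d))"
    unfolding Leq
  proof (rule card_UN_disjoint[OF finD])
    show "\<forall>i\<in>D. finite (nbrs E i)" using c3 by (metis card.infinite zero_neq_numeral)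
    show "\<forall>i\<in>D. \<forall>j\<in>D. i \<noteq> j \<longrightarrow> nbrs E i \<inter> nbrs E j = {}"
      using D_nb unfolding nbrs_def by blast
  qed
  also have "\<dots> = 3 * card D" using c3 by simp
  finally show ?thesis .
qed

lemma final: "8 dvd card V"
proof -
  have "card L = card P1 + card P2" using Pre_card Pre_split by simp
  then have "even (card L)" using P1_even P2_even by simp
  then have eD: "even (card D)" using cardL by simp
  have finD: "finite D" using fin DV finite_subset by auto
  have "V = D \<union> L" "D \<inter> L = {}" unfolding L_def using DV by auto
  then have "card V = card D + card L" using finD finL card_Un_disjoint by metis
  then have "card V = 4 * card D" using cardL by simp
  then show ?thesis using eD by auto
qed

end

theorem mainTheorem2:
  fixes V :: "'a set" and E :: "'a \<Rightarrow> 'a \<Rightarrow> bool" and D :: "'a set"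
  assumes "fullerene V E"
    and "efficient_dominating_set V E D"
  shows "8 dvd card V"
proof -
  have sg: "simple_graph V E" and cu: "cubic V E" using assms(1) unfolding fullerene_def by auto
  obtain rot where rs: "rotation_system V E rot"
    and fc: "\<forall>f\<in>faces E rot. (card f = 5 \<or> card f = 6) \<and> card (fst ` f) = card f"
    using assms(1) unfolding fullerene_def by blast
  interpret fsetup V E D rot
  proof
    show "finite V" using sg unfolding simple_graph_def by blast
    show "\<And>u v. E u v \<Longrightarrow> u \<in> V \<and> v \<in> V" using sg unfolding simple_graph_def by blast
    show "\<And>u v. E u v \<Longrightarrow> E v u" using sg unfolding simple_graph_def by blast
    show "\<And>v. \<not> E v v" using sg unfolding simple_graph_def by blast
    show "\<And>v. v \<in> V \<Longrightarrow> card (nbrs E v) = 3" using cu unfolding cubic_def by blast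
    show "\<And>v. v \<in> V \<Longrightarrow> bij_betw (rot v) (nbrs E v) (nbrs E v)" using rs unfolding rotation_system_def by blast
    show "\<And>v u. v \<in> V \<Longrightarrow> u \<in> nbrs E v \<Longrightarrow> rot v u \<noteq> u" using rs unfolding rotation_system_def by blast
    show "\<And>u v. E u v \<Longrightarrow> card (face_of rot (u,v)) = 5 \<or> card (face_of rot (u,v)) = 6"
    proof -
      fix u v assume "E u v"
      then have "face_of rot (u,v) \<in> faces E rot" unfolding faces_def darts_def by auto
      then show "card (face_of rot (u,v)) = 5 \<or> card (face_of rot (u,v)) = 6" using fc by blast
    qed
    show "D \<subseteq> V" using assms(2) unfolding efficient_dominating_set_def by blast
    show "\<And>u v. u \<in> D \<Longrightarrow> v \<in> D \<Longrightarrow> \<not> E u v" using assms(2) unfolding efficient_dominating_set_def by blast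
    show "\<And>v. v \<in> V \<Longrightarrow> v \<notin> D \<Longrightarrow> card {u\<in>D. E v u} = 1" using assms(2) unfolding efficient_dominating_set_def by blast
  qed
  show ?thesis by (rule final)
qed

end
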